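(* For $k\geq 2$ let $S=\{0,1\}\cup\{2^{2^i}:1\leq i\leq k-1\}$ and $a=2^{2^k}$, and define on $(0,1]$ $$W=\frac{1}{g_S\,g_{\{a\}}}\left(\frac{g_{\{a\}}'\,g_S-g_S'\,g_{\{a\}}}{g_S+g_{\{a\}}}\right)^2 .$$ Then there is a constant $c>0$ (independent of $k$) such that for all sufficiently large $k$, $$\int_{1-\frac{1}{2a}}^{1}\sqrt{W(t)}\,\mathrm{d}t\geq\frac{c}{\sqrt{k}}.$$
   Context: $\mathbb{N}=\{0,1,2,\dots\}$. For a finite set $S\subseteq\mathbb{N}$ define $g_S(t)=\sum_{e\in S}t^{2e}$; in particular $g_{\{a\}}(t)=t^{2a}$. *)

theory Defs
  imports "HOL-Analysis.Analysis"
begin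

definition g :: "nat set \<Rightarrow> real \<Rightarrow> real" where
  "g S t = (\<Sum>e\<in>S. t ^ (2 * e))"

definition Sk :: "nat \<Rightarrow> nat set" where
  "Sk k = {0, 1} \<union> {2 ^ (2 ^ i) | i. 1 \<le> i \<and> i \<le> k - 1}"

definition ak :: "nat \<Rightarrow> nat" where
  "ak k = 2 ^ (2 ^ k)"

definition W :: "nat \<Rightarrow> real \<Rightarrow> real" where
  "W k t = (let gs = g (Sk k); ga = g {ak k} in
     1 / (gs t * ga t) *
     ((deriv ga t * gs t - deriv gs t * ga t) / (gs t + ga t)) ^ 2)"

end

theory Submission
  imports Defs
begin

lemma deriv_g:
  assumes "finite S"
  shows "deriv (g S) t = (\<Sum>e\<in>S. real (2*e) * t ^ (2*e - 1))"
proof -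
  have "((\<lambda>t. \<Sum>e\<in>S. t ^ (2*e)) has_field_derivative (\<Sum>e\<in>S. real (2*e) * t ^ (2*e - 1))) (at t)"
    unfolding One_nat_def by (rule DERIV_sum) (rule DERIV_pow)
  then show ?thesis unfolding g_def[abs_def] by (rule DERIV_imp_deriv)
qed

lemma W_eq:
  assumes "finite (Sk k)"
  shows "W k t = 1 / ((\<Sum>e\<in>Sk k. t ^ (2*e)) * t ^ (2 * ak k)) *
     ((real (2 * ak k) * t ^ (2 * ak k - 1) * (\<Sum>e\<in>Sk k. t ^ (2*e))
       - (\<Sum>e\<in>Sk k. real (2*e) * t ^ (2*e - 1)) * t ^ (2 * ak k))
      / ((\<Sum>e\<in>Sk k. t ^ (2*e)) + t ^ (2 * ak k))) ^ 2"
  using deriv_g[OF assms, of t] deriv_g[of "{ak k}" t]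
  by (simp add: W_def g_def Let_def)

lemma Sk_eq: "Sk k = {0,1} \<union> (\<lambda>i. 2 ^ (2 ^ i)) ` {1..k-1}"
  unfolding Sk_def by auto

lemma Sk_finite: "finite (Sk k)"
  unfolding Sk_eq by auto

lemma Sk_card: assumes "k \<ge> 1" shows "card (Sk k) \<le> k + 1"
proof -
  have "card (Sk k) \<le> card {0::nat,1} + card ((\<lambda>i. 2 ^ (2 ^ i)::nat) ` {1..k-1})"
    unfolding Sk_eq by (rule card_Un_le)
  also have "\<dots> \<le> 2 + (k - 1)"
    using card_image_le[of "{1..k-1}" "\<lambda>i. 2 ^ (2 ^ i)::nat"] by auto
  finally show ?thesis using assms by linarith
qed

lemma Sk_card_pos: "card (Sk k) \<ge> 1"
proof -
  have "0 \<in> Sk k" unfolding Sk_def by auto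
  then have "Sk k \<noteq> {}" by auto
  then show ?thesis using Sk_finite[of k] by (simp add: Suc_le_eq card_gt_0_iff)
qed

lemma Sk_le: assumes "e \<in> Sk k" "k \<ge> 1" shows "e \<le> 2 ^ (2 ^ (k - 1))"
proof -
  have one: "(1::nat) \<le> 2 ^ (2 ^ (k - 1))" by simp
  from assms(1) consider "e = 0" | "e = 1" | i where "1 \<le> i" "i \<le> k-1" "e = 2 ^ (2 ^ i)"
    unfolding Sk_def by auto
  then show ?thesis
  proof cases
    case 3
    have "(2::nat) ^ i \<le> 2 ^ (k-1)" by (rule power_increasing) (use 3 in auto)
    then show ?thesis using 3 by (simp add: power_increasing)
  qed (use one in auto)
qed

lemma ak_sq: assumes "k \<ge> 1" shows "ak k = (2 ^ (2 ^ (k - 1)))^2"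
proof -
  obtain m where m: "k = Suc m" using assms by (cases k) auto
  have "(2::nat) ^ k = 2 ^ m * 2" using m by simp
  then have "ak k = 2 ^ (2 ^ m * 2)" unfolding ak_def by simp
  also have "\<dots> = (2 ^ (2 ^ m))^2" by (simp only: power_mult)
  finally show ?thesis using m by simp
qed

lemma s_ge: assumes "k \<ge> 3" shows "(16::nat) \<le> 2 ^ (2 ^ (k - 1))"
proof -
  have "(2::nat)^2 \<le> 2 ^ (k-1)"
    by (rule power_increasing) (use assms in auto)
  then have "(2::nat)^4 \<le> 2 ^ (2 ^ (k-1))" by (intro power_increasing) auto
  then show ?thesis by simp
qed

lemma key:
  fixes S :: "nat set" and s a :: nat and t :: real
  assumes fin: "finite S" and N1: "card S \<ge> 1" and le: "\<And>e. e\<in>S \<Longrightarrow> e \<le> s" and s8: "s \<ge> 8"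
    and aeq: "a = s^2"
    and t1: "1 - 1/(4*real a) \<le> t" and t2: "t \<le> 1"
  shows "real a ^ 2 / (64 * real (card S)) \<le>
     1 / ((\<Sum>e\<in>S. t ^ (2*e)) * t ^ (2 * a)) *
     ((real (2 * a) * t ^ (2 * a - 1) * (\<Sum>e\<in>S. t ^ (2*e))
       - (\<Sum>e\<in>S. real (2*e) * t ^ (2*e - 1)) * t ^ (2 * a))
      / ((\<Sum>e\<in>S. t ^ (2*e)) + t ^ (2 * a))) ^ 2"
proof -
  define A where "A = real a"
  define rs where "rs = real s"
  define Nr where "Nr = real (card S)"
  define G where "G = (\<Sum>e\<in>S. t ^ (2*e))"
  define D where "D = (\<Sum>e\<in>S. real (2*e) * t ^ (2*e - 1))"
  define P where "P = t ^ (2 * a)"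
  define Q where "Q = t ^ (2 * a - 1)"
  have rs8: "rs \<ge> 8" using s8 unfolding rs_def by simp
  have AS: "A = rs^2" unfolding A_def rs_def aeq by simp
  have "(8::real)*8 \<le> rs*rs" using rs8 by (intro mult_mono) auto
  then have A64: "A \<ge> 64" unfolding AS power2_eq_square by simp
  have N1r: "Nr \<ge> 1" using N1 unfolding Nr_def by simp
  have t34: "t \<ge> 3/4"
  proof -
    have "1/(4*A) \<le> 1/4" using A64 by (simp add: field_simps)
    then show ?thesis using t1 unfolding A_def by linarith
  qed
  have hP: "P \<ge> 1/2"
  proof -
    have "1 + real (2*a) * (-(1/(4*A))) \<le> (1 + (-(1/(4*A)))) ^ (2*a)"
      by (rule Bernoulli_inequality) (use A64 in \<open>simp add: field_simps\<close>)
    moreover have "1 + real (2*a) * (-(1/(4*A))) = 1/2" using A64 unfolding A_def by (simp add: field_simps)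
    moreover have "(1 + (-(1/(4*A)))) ^ (2*a) \<le> t ^ (2*a)"
      by (rule power_mono) (use t1 A64 in \<open>auto simp: A_def field_simps\<close>)
    ultimately show ?thesis unfolding P_def by linarith
  qed
  have hP1: "P \<le> 1" unfolding P_def using t2 t34 by (simp add: power_le_one)
  have hQ: "Q \<ge> P" unfolding P_def Q_def by (rule power_decreasing) (use t2 t34 in auto)
  have pe: "t ^ (2*e) \<ge> P" if "e \<in> S" for e
  proof -
    have "e \<le> s" using le that by simp
    also have "s \<le> a" unfolding aeq by (simp add: power2_eq_square)
    finally have "2*e \<le> 2*a" by simp
    then show ?thesis unfolding P_def by (rule power_decreasing) (use t2 t34 in auto)
  qed
  have hG1: "G \<ge> Nr/2"
  proof -
    have "(\<Sum>e\<in>S. (1/2::real)) \<le> G" unfolding G_def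
      by (rule sum_mono) (use pe hP in force)
    then show ?thesis unfolding Nr_def by simp
  qed
  have hG2: "G \<le> Nr"
  proof -
    have "G \<le> (\<Sum>e\<in>S. (1::real))" unfolding G_def
      by (rule sum_mono) (use t2 t34 in \<open>simp add: power_le_one\<close>)
    then show ?thesis unfolding Nr_def by simp
  qed
  have hD0: "D \<ge> 0" unfolding D_def by (rule sum_nonneg) (use t34 in simp)
  have hD: "D \<le> 2 * Nr * rs"
  proof -
    have "D \<le> (\<Sum>e\<in>S. 2 * rs)" unfolding D_def
    proof (rule sum_mono)
      fix e assume e: "e \<in> S"
      have "t ^ (2*e - 1) \<le> 1" using t2 t34 by (simp add: power_le_one)
      moreover have "real (2*e) \<le> 2 * rs" using le[OF e] unfolding rs_def by simp
      ultimately show "real (2*e) * t ^ (2*e - 1) \<le> 2 * rs"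
        using t34 by (smt (verit) mult_left_le of_nat_0_le_iff zero_le_power mult_mono)
    qed
    then show ?thesis unfolding Nr_def by simp
  qed
  have hnum1: "real (2*a) * Q * G \<ge> 2*A*(1/2)*(Nr/2)"
  proof -
    have e2: "real (2*a) = 2*A" by (simp add: A_def)
    have "2*A*(1/2) \<le> 2*A * Q" using hQ hP A64
      by (intro mult_left_mono) auto
    then have "2*A*(1/2) \<le> real (2*a) * Q" using e2 by simp
    then show ?thesis by (rule mult_mono[OF _ hG1]) (use hQ hP N1r in auto)
  qed
  have hnum2: "D * P \<le> 2 * Nr * rs" using hD hD0 hP1 hP
    by (smt (verit) mult_left_le)
  define num where "num = real (2*a) * Q * G - D * P"
  have hnum: "num \<ge> Nr * A / 4"
  proof -
    have "rs^2/4 \<ge> 2*rs" using rs8 by (simp add: power2_eq_square field_simps)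
    then have "Nr * (rs^2/4) \<ge> Nr * (2*rs)" using N1r by (intro mult_left_mono) auto
    then show ?thesis using hnum1 hnum2 unfolding num_def AS by (simp add: field_simps)
  qed
  have Gpos: "G > 0" and Ppos: "P > 0" using hG1 N1r hP by auto
  define den where "den = G * P * (G + P)^2"
  have denpos: "den > 0" unfolding den_def using Gpos Ppos by simp
  have denle: "den \<le> 4 * Nr^3"
  proof -
    have "G * P \<le> Nr" using hG2 hP1 Gpos Ppos by (smt (verit) mult_left_le)
    moreover have "(G + P)^2 \<le> (2*Nr)^2" using hG2 hP1 N1r Gpos Ppos by (intro power_mono) auto
    ultimately have "den \<le> Nr * (2*Nr)^2" unfolding den_def using Gpos Ppos N1r
      by (intro mult_mono) auto
    then show ?thesis by (simp add: power2_eq_square power3_eq_cube field_simps)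
  qed
  have "(Nr*A/4)^2 / (4*Nr^3) \<le> num^2 / den"
  proof (rule frac_le)
    show "(Nr*A/4)^2 \<le> num^2" using hnum N1r A64 by (intro power_mono) auto
  qed (use denpos denle in auto)
  moreover have "(Nr*A/4)^2 / (4*Nr^3) = A^2 / (64 * Nr)" using N1r
    by (simp add: power2_eq_square power3_eq_cube field_simps)
  moreover have "num^2 / den = 1 / (G * P) * (num / (G + P))^2"
    unfolding den_def by (simp add: power_divide field_simps)
  ultimately show ?thesis unfolding num_def G_def P_def Q_def D_def A_def Nr_def by simp
qed

lemma W_nonneg: assumes "t > 0" shows "W k t \<ge> 0"
proof -
  have "(\<Sum>e\<in>Sk k. t ^ (2*e)) > 0"
    using Sk_finite[of k] Sk_card_pos[of k] assms by (intro sum_pos) auto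
  then show ?thesis unfolding W_eq[OF Sk_finite] using assms by simp
qed

theorem lemma6p3:
  shows "\<exists>c::real. c > 0 \<and> (\<exists>K::nat. \<forall>k\<ge>K. k \<ge> 2 \<longrightarrow>
    integral {1 - 1 / (2 * real (ak k)) .. 1} (\<lambda>t. sqrt (W k t)) \<ge> c / sqrt (real k))"
proof (intro exI conjI allI impI)
  show "(1/64::real) > 0" by simp
  fix k :: nat assume k3: "k \<ge> 3"
  define s :: nat where "s = 2 ^ (2 ^ (k - 1))"
  define A where "A = real (ak k)"
  define lo where "lo = 1 - 1 / (2 * A)"
  define b where "b = 1 - 1 / (4 * A)"
  define f where "f = (\<lambda>t. sqrt (W k t))"
  have aeq: "ak k = s^2" unfolding s_def using ak_sq k3 by simp
  have s8: "s \<ge> 8" using s_ge[OF k3] unfolding s_def by simp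
  have "real s \<ge> 8" using s8 by simp
  then have "(8::real) * 8 \<le> real s * real s" by (intro mult_mono) auto
  then have A64: "A \<ge> 64" unfolding A_def aeq by (simp add: power2_eq_square)
  have lo0: "lo > 0" unfolding lo_def using A64 by (simp add: field_simps)
  have lob: "lo \<le> b" unfolding lo_def b_def using A64 by (simp add: field_simps)
  have b1: "b \<le> 1" unfolding b_def using A64 by (simp add: field_simps)
  have finS: "finite (Sk k)" by (rule Sk_finite)
  have gpos: "(\<Sum>e\<in>Sk k. t ^ (2*e)) > 0" if "t > 0" for t :: real
    using Sk_finite[of k] Sk_card_pos[of k] that by (intro sum_pos) auto
  have fe: "f = (\<lambda>t. sqrt (1 / ((\<Sum>e\<in>Sk k. t ^ (2*e)) * t ^ (2 * ak k)) *
     ((real (2 * ak k) * t ^ (2 * ak k - 1) * (\<Sum>e\<in>Sk k. t ^ (2*e))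
       - (\<Sum>e\<in>Sk k. real (2*e) * t ^ (2*e - 1)) * t ^ (2 * ak k))
      / ((\<Sum>e\<in>Sk k. t ^ (2*e)) + t ^ (2 * ak k))) ^ 2))"
    unfolding f_def by (rule ext) (simp only: W_eq[OF finS])
  have cont: "continuous_on {lo..1} f"
  proof -
    have nz: "\<forall>t\<in>{lo..1}. (\<Sum>e\<in>Sk k. t ^ (2*e)) * t ^ (2 * ak k) \<noteq> 0 \<and>
        (\<Sum>e\<in>Sk k. t ^ (2*e)) + t ^ (2 * ak k) \<noteq> 0"
    proof
      fix t assume "t \<in> {lo..1}"
      then have t0: "t > 0" using lo0 by auto
      show "(\<Sum>e\<in>Sk k. t ^ (2*e)) * t ^ (2 * ak k) \<noteq> 0 \<and>
        (\<Sum>e\<in>Sk k. t ^ (2*e)) + t ^ (2 * ak k) \<noteq> 0"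
        using gpos[OF t0] t0 by (smt (verit) zero_less_power mult_pos_pos)
    qed
    show ?thesis unfolding fe
      by (intro continuous_intros) (use nz in auto)
  qed
  have int: "f integrable_on {lo..1}" by (rule integrable_continuous_interval[OF cont])
  have split: "integral {lo..b} f + integral {b..1} f = integral {lo..1} f"
    by (rule Henstock_Kurzweil_Integration.integral_combine[OF lob b1 int])
  have I1: "integral {lo..b} f \<ge> 0"
  proof (rule integral_nonneg)
    show "f integrable_on {lo..b}" by (rule integrable_subinterval_real[OF int]) (use b1 in auto)
    fix t assume "t \<in> {lo..b}"
    then have "t > 0" using lo0 by auto
    then show "0 \<le> f t" unfolding f_def using W_nonneg by simp
  qed
  define m where "m = A / (16 * sqrt (real k))"
  have kpos: "real k \<ge> 3" using k3 by simp
  have pw: "f t \<ge> m" if t: "t \<in> {b..1}" for t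
  proof -
    have "real (ak k) ^ 2 / (64 * real (card (Sk k))) \<le> W k t"
      unfolding W_eq[OF finS]
    proof (rule key[OF finS Sk_card_pos _ s8 aeq])
      show "e \<le> s" if "e \<in> Sk k" for e unfolding s_def by (rule Sk_le) (use that k3 in auto)
      show "1 - 1 / (4 * real (ak k)) \<le> t" using t unfolding b_def A_def by auto
      show "t \<le> 1" using t by auto
    qed
    moreover have "real (card (Sk k)) \<le> 2 * real k"
      using Sk_card[of k] k3 by simp
    then have "A^2 / (256 * real k) \<le> A^2 / (64 * real (card (Sk k)))"
      using Sk_card_pos[of k] kpos A64 by (intro divide_left_mono) auto
    moreover have "m^2 = A^2 / (256 * real k)" unfolding m_def using kpos
      by (simp add: power_divide power_mult_distrib)
    ultimately have "m^2 \<le> W k t" unfolding A_def by simp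
    then show ?thesis unfolding f_def by (rule real_le_rsqrt)
  qed
  have I2: "integral {b..1} f \<ge> integral {b..1} (\<lambda>_. m)"
  proof (rule integral_le)
    show "f integrable_on {b..1}" by (rule integrable_subinterval_real[OF int]) (use lob in auto)
  qed (use pw in auto)
  have "integral {b..1} (\<lambda>_. m) = (1 - b) * m" using b1 by simp
  also have "\<dots> = (1/64) / sqrt (real k)" unfolding b_def m_def using A64 by (simp add: field_simps)
  finally show "(1/64) / sqrt (real k) \<le> integral {1 - 1 / (2 * real (ak k))..1} (\<lambda>t. sqrt (W k t))"
    using I1 I2 split unfolding lo_def A_def f_def by linarith
qed

end
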